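(* Let $S$ be a finite set and $f:S\to\mathbb{Z}_3$ a function such that, for some ordering $a,b,c$ of the elements of $\mathbb{Z}_3$, $|f^{-1}(a)|=\frac{2}{3}|S|$ and $|f^{-1}(b)|=|f^{-1}(c)|=\frac16|S|$. Let $\omega=e^{2\pi i/3}$, $\phi=\frac{1}{\sqrt3}\sum_{h\in\mathbb{Z}_3}\omega^{-h}|h\rangle$, $u_S=|S|^{-1/2}\sum_s|s\rangle$, $U_f(|s\rangle\otimes|g\rangle)=|s\rangle\otimes|f(s)+g\rangle$, $D=\mathrm{id}-\frac{2}{|S|}\sum_{s,t}|s\rangle\langle t|$ on $\mathbb{C}[S]$, and $\psi=(D\otimes\mathrm{id})U_f(u_S\otimes\phi)$. Then for every $s\in S$ with $f(s)=a$ one has $(\langle s|\otimes\mathrm{id})\psi=0$; hence measuring the first factor of $\psi$ in the basis $\{|s\rangle\}$ returns, with certainty, an element $s$ with $f(s)\in\{b,c\}$.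
   Context: $\mathbb{C}[X]$ denotes the Hilbert space with orthonormal basis $\{|x\rangle : x\in X\}$ for a finite set $X$; $\mathbb{Z}_3$ is the integers mod 3 under addition. *)

theory Defs
  imports "HOL-Analysis.Analysis" "HOL-Library.Numeral_Type"
begin

text \<open>Z_3 is the finite ring type 3 (HOL-Library.Numeral_Type).
  Vectors of C[S] tensor C[Z_3] are functions on pairs (s,g), supported on S.
  Rep_bit1 h is the integer representative of h in {0,1,2}.\<close>

definition omega3 :: complex where
  "omega3 = exp (2 * pi * \<i> / 3)"

definition phi3 :: "3 \<Rightarrow> complex" where
  "phi3 h = (1 / sqrt 3) * omega3 powi (- Rep_bit1 h)"

definition init_state :: "'s set \<Rightarrow> ('s \<times> 3 \<Rightarrow> complex)" where
  "init_state S = (\<lambda>(s, g). if s \<in> S then (1 / sqrt (real (card S))) * phi3 g else 0)"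

text \<open>U_f (|s> tensor |g>) = |s> tensor |f(s)+g>, i.e. (U_f v)(s,g) = v(s, g - f s).\<close>
definition U_oracle :: "'s set \<Rightarrow> ('s \<Rightarrow> 3) \<Rightarrow> ('s \<times> 3 \<Rightarrow> complex) \<Rightarrow> ('s \<times> 3 \<Rightarrow> complex)" where
  "U_oracle S f v = (\<lambda>(s, g). if s \<in> S then v (s, g - f s) else v (s, g))"

definition D_tensor_id :: "'s set \<Rightarrow> ('s \<times> 3 \<Rightarrow> complex) \<Rightarrow> ('s \<times> 3 \<Rightarrow> complex)" where
  "D_tensor_id S v = (\<lambda>(s, g). if s \<in> S
      then v (s, g) - (2 / of_nat (card S)) * (\<Sum>t\<in>S. v (t, g)) else v (s, g))"

definition psi_state :: "'s set \<Rightarrow> ('s \<Rightarrow> 3) \<Rightarrow> ('s \<times> 3 \<Rightarrow> complex)" where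
  "psi_state S f = D_tensor_id S (U_oracle S f (init_state S))"

end

theory Submission
  imports Defs
begin
lemma ex3: "(x::3) = 0 \<or> x = 1 \<or> x = 2"
proof (cases x)
  case (of_int z)
  then have "z = 0 \<or> z = 1 \<or> z = 2" by auto
  then show ?thesis using of_int by auto
qed
lemma u3: "(UNIV::3 set) = {0,1,2}" using ex3 by auto
lemma w: "omega3 = Complex (-1/2) (sqrt 3/2)"
  unfolding omega3_def by (simp add: complex_eq_iff exp_eq_polar cis.sel cos_120' sin_120' mult.commute)
lemma w3: "omega3 ^ 3 = 1"
  by (simp add: w complex_eq_iff numeral_3_eq_3 power2_eq_square algebra_simps) 
lemma R: "Rep_bit1 (0::3) = 0" "Rep_bit1 (1::3) = 1" "Rep_bit1 (2::3) = 2" 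
  by (simp_all add: bit1.Rep_0 bit1.Rep_1 bit1.Rep_numeral)
lemma wc: "omega3 * Complex (-1/2) (-sqrt 3/2) = 1"
  by (simp add: w complex_eq_iff)
lemma w2: "omega3^2 = Complex (-1/2) (-sqrt 3/2)"
  by (simp add: w complex_eq_iff power2_eq_square)
lemma iw: "inverse omega3 = Complex (-1/2) (-sqrt 3/2)"
  using wc inverse_unique by blast
lemma iw2: "inverse (omega3^2) = omega3"
  using wc inverse_unique w2 by (metis mult.commute)
lemma s3: "sqrt 3 * sqrt 3 = (3::real)" by simp
lemma phv: "phi3 0 = Complex (1/sqrt 3) 0"
   "phi3 1 = Complex (-1/(2 * sqrt 3)) (-1/2)"
   "phi3 2 = Complex (-1/(2 * sqrt 3)) (1/2)"
proof -
  show "phi3 0 = Complex (1/sqrt 3) 0" by (simp add: phi3_def R complex_eq_iff)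
  have "phi3 1 = (1/sqrt 3) * Complex (-1/2) (-sqrt 3/2)"
    by (simp add: phi3_def R power_int_def iw)
  then show "phi3 1 = Complex (-1/(2 * sqrt 3)) (-1/2)"
    by (simp add: complex_eq_iff)
  have "phi3 2 = (1/sqrt 3) * omega3"
    by (simp add: phi3_def R power_int_def iw w complex_eq_iff power2_eq_square)
  then show "phi3 2 = Complex (-1/(2 * sqrt 3)) (1/2)"
    by (simp add: complex_eq_iff w)
qed
lemma c3: "((x::3) = 0 \<Longrightarrow> P) \<Longrightarrow> (x = 1 \<Longrightarrow> P) \<Longrightarrow> (x = 2 \<Longrightarrow> P) \<Longrightarrow> P"
  using ex3 by blast
lemma m3: "-(1::3) = 2" "-(2::3) = 1"
  by (simp_all add: minus_equation_iff[of 1] minus_equation_iff[of 2])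
lemma p012: "phi3 0 + phi3 1 + phi3 2 = 0" by (simp add: phv complex_eq_iff)
lemma sum3: "distinct [a,b,c::3] \<Longrightarrow> phi3 (g-a) + phi3 (g-b) + phi3 (g-c) = 0"
  using p012
  by (cases a rule: c3; cases b rule: c3; cases c rule: c3; cases g rule: c3) (simp_all add: algebra_simps m3)
lemma d1: "(p::3) \<noteq> q \<Longrightarrow> (cmod (phi3 p - phi3 q))\<^sup>2 = 1"
proof -
  assume pq: "p \<noteq> q"
  have e: "(cmod (phi3 p - phi3 q))\<^sup>2 = (Re (phi3 p) - Re (phi3 q))\<^sup>2 + (Im (phi3 p) - Im (phi3 q))\<^sup>2"
    by (simp add: cmod_power2)
  have s3: "sqrt 3 * sqrt 3 = (3::real)" by simp
  show ?thesis unfolding e using pq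
    by (cases p rule: c3; cases q rule: c3) (simp_all add: phv power2_eq_square field_simps)
qed
lemma nd: "(x::3) \<noteq> a \<Longrightarrow> (\<Sum>g\<in>UNIV. (cmod (phi3 (g-x) - phi3 (g-a)))\<^sup>2) = 3"
  by (simp add: d1)
lemma comb:
  fixes pa pb pc ca cb cc nn :: complex
  assumes h: "pb + pc = - pa" "ca = 2 * nn / 3" "cb = nn / 6" "cc = nn / 6"
  shows "ca * pa + (cb * pb + cc * pc) = nn / 2 * pa"
proof -
  have "ca * pa + (cb * pb + cc * pc) = ca * pa + nn / 6 * (pb + pc)" unfolding h(3,4) by (simp add: distrib_left)
  also have "\<dots> = nn / 2 * pa" unfolding h(1,2) by (simp add: field_simps)
  finally show ?thesis .
qed

theorem mainTheorem9:
  fixes S :: "'s set" and f :: "'s \<Rightarrow> 3" and a b c :: 3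
  assumes "finite S" and "S \<noteq> {}"
    and "distinct [a, b, c]"
    and "3 * card {s \<in> S. f s = a} = 2 * card S"
    and "6 * card {s \<in> S. f s = b} = card S"
    and "6 * card {s \<in> S. f s = c} = card S"
  shows "(\<forall>s\<in>S. f s = a \<longrightarrow> (\<forall>g. psi_state S f (s, g) = 0))
         \<and> (\<Sum>s\<in>{s\<in>S. f s \<in> {b, c}}. \<Sum>g\<in>UNIV. (cmod (psi_state S f (s, g)))\<^sup>2) = 1"
proof -
  define n where "n = card S"
  define A where "A = {s \<in> S. f s = a}"
  define B where "B = {s \<in> S. f s = b}"
  define C where "C = {s \<in> S. f s = c}"
  have fin: "finite S" by fact
  have npos: "n > 0" using assms(1,2) n_def by (simp add: card_gt_0_iff)
  have dist: "a \<noteq> b" "a \<noteq> c" "b \<noteq> c" using assms(3) by auto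
  have allx: "x = a \<or> x = b \<or> x = c" for x :: 3
    using dist by (cases a rule: c3; cases b rule: c3; cases c rule: c3; cases x rule: c3) simp_all
  have SABC: "S = A \<union> (B \<union> C)" unfolding A_def B_def C_def using allx by auto
  have fA: "finite A" "finite B" "finite C" using fin unfolding A_def B_def C_def by auto
  have dj: "A \<inter> (B \<union> C) = {}" "B \<inter> C = {}" unfolding A_def B_def C_def using dist by auto
  have cA: "3 * card A = 2 * n" and cB: "6 * card B = n" and cC: "6 * card C = n"
    using assms(4-6) unfolding A_def B_def C_def n_def by auto
  have sumS: "(\<Sum>t\<in>S. phi3 (g - f t)) = of_nat n / 2 * phi3 (g - a)" for g
  proof -
    have "(\<Sum>t\<in>S. phi3 (g - f t)) = (\<Sum>t\<in>A. phi3 (g - f t)) + ((\<Sum>t\<in>B. phi3 (g - f t)) + (\<Sum>t\<in>C. phi3 (g - f t)))"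
      unfolding SABC using fA dj by (simp add: sum.union_disjoint)
    also have "\<dots> = of_nat (card A) * phi3 (g - a) + (of_nat (card B) * phi3 (g - b) + of_nat (card C) * phi3 (g - c))"
      unfolding A_def B_def C_def by simp
    also have "\<dots> = of_nat n / 2 * phi3 (g - a)"
    proof -
      have "phi3 (g - b) + phi3 (g - c) = - phi3 (g - a)" using sum3[OF assms(3), of g]
        by (simp add: algebra_simps eq_neg_iff_add_eq_0)
      moreover have "(of_nat (card A) :: complex) = 2 * of_nat n / 3"
      proof -
        have "3 * (of_nat (card A) :: complex) = of_nat (3 * card A)" by simp
        also have "\<dots> = of_nat (2 * n)" using cA by simp
        finally show ?thesis by (simp add: field_simps)
      qed
      moreover have "(of_nat (card B) :: complex) = of_nat n / 6"
      proof -
        have "6 * (of_nat (card B) :: complex) = of_nat (6 * card B)" by simp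
        also have "\<dots> = of_nat (n)" using cB by simp
        finally show ?thesis by (simp add: field_simps)
      qed
      moreover have "(of_nat (card C) :: complex) = of_nat n / 6"
      proof -
        have "6 * (of_nat (card C) :: complex) = of_nat (6 * card C)" by simp
        also have "\<dots> = of_nat (n)" using cC by simp
        finally show ?thesis by (simp add: field_simps)
      qed
      ultimately show ?thesis
        by (rule comb)
    qed
    finally show ?thesis .
  qed
  define r :: complex where "r = of_real (1 / sqrt (real n))"
  have psi: "psi_state S f (s, g) = r * (phi3 (g - f s) - phi3 (g - a))" if "s \<in> S" for s g
  proof -
    have U: "U_oracle S f (init_state S) (t, g) = r * phi3 (g - f t)" if "t \<in> S" for t
      using that by (simp add: U_oracle_def init_state_def r_def n_def)
    have "psi_state S f (s, g) = r * phi3 (g - f s) - (2 / of_nat n) * (\<Sum>t\<in>S. r * phi3 (g - f t))"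
      using that U by (simp add: psi_state_def D_tensor_id_def n_def)
    also have "\<dots> = r * phi3 (g - f s) - (2 / of_nat n) * (r * (of_nat n / 2 * phi3 (g - a)))"
      by (simp add: sum_distrib_left[symmetric] sumS)
    also have "\<dots> = r * (phi3 (g - f s) - phi3 (g - a))"
      using npos by (simp add: field_simps)
    finally show ?thesis .
  qed
  have part1: "\<forall>s\<in>S. f s = a \<longrightarrow> (\<forall>g. psi_state S f (s, g) = 0)"
    using psi by simp
  have r2: "(cmod r)\<^sup>2 = 1 / real n" using npos unfolding r_def norm_of_real by (simp add: power_divide)
  have inner: "(\<Sum>g\<in>UNIV. (cmod (psi_state S f (s, g)))\<^sup>2) = 3 / real n"
    if "s \<in> {s\<in>S. f s \<in> {b, c}}" for s
  proof -
    have sS: "s \<in> S" and fa: "f s \<noteq> a" using that dist by auto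
    have "(\<Sum>g\<in>UNIV. (cmod (psi_state S f (s, g)))\<^sup>2) = (\<Sum>g\<in>UNIV. (cmod r)\<^sup>2 * (cmod (phi3 (g - f s) - phi3 (g - a)))\<^sup>2)"
      using sS psi by (simp add: norm_mult power_mult_distrib)
    also have "\<dots> = (cmod r)\<^sup>2 * 3" by (simp add: sum_distrib_left[symmetric] nd[OF fa])
    finally show ?thesis using r2 by simp
  qed
  have cBC: "card {s\<in>S. f s \<in> {b, c}} = card B + card C"
  proof -
    have "{s\<in>S. f s \<in> {b, c}} = B \<union> C" unfolding B_def C_def by auto
    then show ?thesis using fA dj by (simp add: card_Un_disjoint)
  qed
  have "(\<Sum>s\<in>{s\<in>S. f s \<in> {b, c}}. \<Sum>g\<in>UNIV. (cmod (psi_state S f (s, g)))\<^sup>2)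
        = real (card {s\<in>S. f s \<in> {b, c}}) * (3 / real n)"
    using inner by simp
  also have "\<dots> = 1" using cBC cB cC npos
  proof -
    have "3 * (card B + card C) = n" using cB cC by simp
    then have "3 * real (card B + card C) = real n" by (metis of_nat_mult of_nat_numeral)
    then show ?thesis using cBC npos by (simp add: field_simps)
  qed
  finally show ?thesis using part1 by simp
qed
end
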